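(* For every $K>0$ there exist $\varepsilon>0$ and $C>0$ such that for all $\theta\in(0,\varepsilon)$ and all real $\delta$ with $|\delta|\le K\theta$, \[\big|f_0(\theta+\delta)-f_0(\theta)-f_0'(0)\,\delta\big|\le C\,\theta|\delta|,\qquad \big|j_0(\theta+\delta)-j_0(\theta)\big|\le C|\delta|.\] Moreover $f_0(0)=\ln 4$, $\exp(f_0'(0))=e/3$ and $j_0(0)=0$.
   Context: Define $\lambda:[0,\infty)\to(0,1/4]$ by $\lambda(0)=1/4$ and, for $\theta>0$, $\lambda(\theta)$ is the unique $\lambda\in(0,1/4)$ with $-1+\frac{\operatorname{artanh}(\sqrt{1-4\lambda})}{\sqrt{1-4\lambda}}=\theta$. For $\theta>0$ set $f(\theta)=-\ln\lambda(\theta)-2\theta-\theta\ln(1-4\lambda(\theta))$ and $j(\theta)=-\tfrac12\ln(1-4(\theta+1)\lambda(\theta))+\tfrac12\ln 2$, and $f_0(\theta)=f(\theta)+\theta\ln\theta$, $j_0(\theta)=j(\theta)+\tfrac12\ln\theta$. The functions $f_0,j_0$ are real-analytic on $(0,\infty)$ and extend to real-analytic functions on an open neighbourhood of $0$; $f_0,j_0$ denote these extensions. *)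

theory Defs
  imports "HOL-Analysis.Analysis"
begin

definition lam :: "real \<Rightarrow> real" where
  "lam \<theta> = (if \<theta> = 0 then 1/4 else
     (THE l. 0 < l \<and> l < 1/4 \<and>
        -1 + artanh (sqrt (1 - 4*l)) / sqrt (1 - 4*l) = \<theta>))"

definition f :: "real \<Rightarrow> real" where
  "f \<theta> = - ln (lam \<theta>) - 2*\<theta> - \<theta> * ln (1 - 4 * lam \<theta>)"

definition j :: "real \<Rightarrow> real" where
  "j \<theta> = - (1/2) * ln (1 - 4 * (\<theta> + 1) * lam \<theta>) + (1/2) * ln 2"

text \<open>f0 and j0 on (0,inf), before extension\<close>
definition f0 :: "real \<Rightarrow> real" where
  "f0 \<theta> = f \<theta> + \<theta> * ln \<theta>"

definition j0 :: "real \<Rightarrow> real" where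
  "j0 \<theta> = j \<theta> + (1/2) * ln \<theta>"

definition real_analytic_on :: "(real \<Rightarrow> real) \<Rightarrow> real set \<Rightarrow> bool" where
  "real_analytic_on g S \<longleftrightarrow> open S \<and> (\<forall>x\<in>S. \<exists>r>0. \<exists>a::nat \<Rightarrow> real.
      \<forall>y. \<bar>y - x\<bar> < r \<longrightarrow> (\<lambda>n. a n * (y - x)^n) sums g y)"

end

theory Submission
  imports Defs "HOL-Real_Asymp.Real_Asymp"
begin


lemma lip_bound:
  fixes H H' :: "real \<Rightarrow> real"
  assumes der: "\<And>t. \<bar>t\<bar> \<le> m \<Longrightarrow> (H has_real_derivative H' t) (at t)"
    and bd: "\<And>t. \<bar>t\<bar> \<le> m \<Longrightarrow> \<bar>H' t\<bar> \<le> B"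
    and x: "\<bar>x\<bar> \<le> m" and y: "\<bar>y\<bar> \<le> m"
  shows "\<bar>H y - H x\<bar> \<le> B * \<bar>y - x\<bar>"
proof -
  have main: "\<bar>H b - H a\<bar> \<le> B * (b - a)" if "a < b" "\<bar>a\<bar> \<le> m" "\<bar>b\<bar> \<le> m" for a b
  proof -
    have d: "(H has_real_derivative H' x) (at x)" if "a \<le> x" "x \<le> b" for x
    proof -
      have "\<bar>x\<bar> \<le> m" using that \<open>\<bar>a\<bar> \<le> m\<close> \<open>\<bar>b\<bar> \<le> m\<close> by auto
      thus ?thesis by (rule der)
    qed
    obtain z where z: "a < z" "z < b" "H b - H a = (b - a) * H' z"
      using MVT2[OF \<open>a < b\<close> d] by blast
    have "\<bar>z\<bar> \<le> m" using z that by auto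
    hence "\<bar>H' z\<bar> \<le> B" by (rule bd)
    hence "\<bar>(b - a) * H' z\<bar> \<le> (b - a) * B" using that
      by (simp add: abs_mult mult_left_mono)
    thus ?thesis using z by (simp add: mult.commute)
  qed
  consider "x < y" | "x = y" | "y < x" by linarith
  thus ?thesis
  proof cases
    case 1 thus ?thesis using main[OF 1 x y] by simp
  next
    case 3 thus ?thesis using main[OF 3 y x] by (simp add: abs_minus_commute)
  qed simp
qed

lemma analytic_local:
  fixes G :: "real \<Rightarrow> real"
  assumes "real_analytic_on G U" "0 \<in> U"
  shows "\<exists>\<rho>>0. \<exists>M>0. \<exists>G1. (\<forall>x. \<bar>x\<bar> \<le> \<rho> \<longrightarrow> (G has_real_derivative G1 x) (at x))
     \<and> (\<forall>x. \<bar>x\<bar> \<le> \<rho> \<longrightarrow> \<bar>G1 x - G1 0\<bar> \<le> M * \<bar>x\<bar>) \<and> (\<forall>x. \<bar>x\<bar> \<le> \<rho> \<longrightarrow> \<bar>G1 x\<bar> \<le> M)"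
proof -
  obtain r a where r: "r > 0" and sa: "\<And>y. \<bar>y - 0\<bar> < r \<Longrightarrow> (\<lambda>n. a n * (y - 0)^n) sums G y"
    using assms unfolding real_analytic_on_def by blast
  have s0: "summable (\<lambda>n. a n * y^n)" if "norm y < r" for y
    using sa[of y] that by (auto simp: sums_iff)
  have s1: "summable (\<lambda>n. diffs a n * y^n)" if "norm y < r" for y
    by (rule termdiff_converges[OF that s0])
  have s2: "summable (\<lambda>n. diffs (diffs a) n * y^n)" if "norm y < r" for y
    by (rule termdiff_converges[OF that s1])
  define G1 where "G1 y = (\<Sum>n. diffs a n * y^n)" for y
  define G2 where "G2 y = (\<Sum>n. diffs (diffs a) n * y^n)" for y
  define G3 where "G3 y = (\<Sum>n. diffs (diffs (diffs a)) n * y^n)" for y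
  have dG: "(G has_real_derivative G1 y) (at y)" if "\<bar>y\<bar> < r" for y
  proof (rule has_field_derivative_transform_within_open)
    show "((\<lambda>z. \<Sum>n. a n * z^n) has_real_derivative G1 y) (at y)"
      unfolding G1_def by (rule termdiffs_strong'[OF s0]) (use that in auto)
    show "open (ball 0 r)" by simp
    show "y \<in> ball 0 r" using that by simp
    show "(\<Sum>n. a n * x^n) = G x" if "x \<in> ball 0 r" for x
      using sa[of x] that by (auto simp: sums_iff)
  qed
  have dG1: "(G1 has_real_derivative G2 y) (at y)" if "\<bar>y\<bar> < r" for y
    unfolding G1_def G2_def by (rule termdiffs_strong'[OF s1]) (use that in auto)
  have dG2: "(G2 has_real_derivative G3 y) (at y)" if "\<bar>y\<bar> < r" for y
    unfolding G3_def G2_def by (rule termdiffs_strong'[OF s2]) (use that in auto)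
  define \<rho> where "\<rho> = r / 2"
  have \<rho>: "\<rho> > 0" "\<rho> < r" using r by (auto simp: \<rho>_def)
  have c1: "\<forall>x. -\<rho> \<le> x \<and> x \<le> \<rho> \<longrightarrow> isCont (\<lambda>x. \<bar>G1 x\<bar>) x"
  proof (intro allI impI)
    fix x assume "-\<rho> \<le> x \<and> x \<le> \<rho>"
    hence "\<bar>x\<bar> < r" using \<rho> by auto
    thus "isCont (\<lambda>x. \<bar>G1 x\<bar>) x" by (intro continuous_intros DERIV_isCont[OF dG1])
  qed
  have c2: "\<forall>x. -\<rho> \<le> x \<and> x \<le> \<rho> \<longrightarrow> isCont (\<lambda>x. \<bar>G2 x\<bar>) x"
  proof (intro allI impI)
    fix x assume "-\<rho> \<le> x \<and> x \<le> \<rho>"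
    hence "\<bar>x\<bar> < r" using \<rho> by auto
    thus "isCont (\<lambda>x. \<bar>G2 x\<bar>) x" by (intro continuous_intros DERIV_isCont[OF dG2])
  qed
  have mr: "-\<rho> \<le> \<rho>" using \<rho> by simp
  obtain M1 where M1: "\<forall>x. -\<rho> \<le> x \<and> x \<le> \<rho> \<longrightarrow> \<bar>G1 x\<bar> \<le> M1"
    using isCont_bounded[OF mr c1] by blast
  obtain M2 where M2: "\<forall>x. -\<rho> \<le> x \<and> x \<le> \<rho> \<longrightarrow> \<bar>G2 x\<bar> \<le> M2"
    using isCont_bounded[OF mr c2] by blast
  define M where "M = max M1 M2 + 1"
  have "\<bar>G1 0\<bar> \<le> M1" using M1 \<rho> by simp
  hence "0 \<le> M1" by linarith
  hence "M > 0" unfolding M_def by simp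
  have MM1: "M1 \<le> M" and MM2: "M2 \<le> M" unfolding M_def by simp_all
  moreover have "\<forall>x. \<bar>x\<bar> \<le> \<rho> \<longrightarrow> \<bar>G1 x - G1 0\<bar> \<le> M * \<bar>x\<bar>"
  proof (intro allI impI)
    fix x :: real assume x: "\<bar>x\<bar> \<le> \<rho>"
    have "\<bar>G1 x - G1 0\<bar> \<le> M * \<bar>x - 0\<bar>"
    proof (rule lip_bound[where m = "\<bar>x\<bar>" and H' = G2])
      show "(G1 has_real_derivative G2 t) (at t)" if "\<bar>t\<bar> \<le> \<bar>x\<bar>" for t
        using dG1 that x \<rho> by simp
      show "\<bar>G2 t\<bar> \<le> M" if "\<bar>t\<bar> \<le> \<bar>x\<bar>" for t
      proof -
        have "-\<rho> \<le> t \<and> t \<le> \<rho>" using that x by (auto simp: abs_le_iff)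
        hence "\<bar>G2 t\<bar> \<le> M2" using M2 by blast
        thus ?thesis using MM2 by linarith
      qed
    qed auto
    thus "\<bar>G1 x - G1 0\<bar> \<le> M * \<bar>x\<bar>" by simp
  qed
  moreover have "\<forall>x. \<bar>x\<bar> \<le> \<rho> \<longrightarrow> \<bar>G1 x\<bar> \<le> M"
  proof (intro allI impI)
    fix x :: real assume "\<bar>x\<bar> \<le> \<rho>"
    hence "-\<rho> \<le> x \<and> x \<le> \<rho>" by (auto simp: abs_le_iff)
    hence "\<bar>G1 x\<bar> \<le> M1" using M1 by blast
    thus "\<bar>G1 x\<bar> \<le> M" using MM1 by linarith
  qed
  moreover have "\<forall>x. \<bar>x\<bar> \<le> \<rho> \<longrightarrow> (G has_real_derivative G1 x) (at x)"
    using dG \<rho> by simp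
  ultimately show ?thesis using \<rho> \<open>M > 0\<close> by blast
qed


definition gg :: "real \<Rightarrow> real" where
  "gg s = ln ((1 + s) / (1 - s)) / (2 * s) - 1"

lemma gg_artanh: "gg s = artanh s / s - 1"
  by (simp add: gg_def artanh_def)

lemma artanh_pos: fixes x :: real assumes "0 < x" "x < 1" shows "artanh x > 0"
proof -
  have "(1 + x) / (1 - x) > 1" using assms by (simp add: field_simps)
  thus ?thesis by (simp add: artanh_def)
qed

lemma r_der:
  fixes x :: real assumes "\<bar>x\<bar> < 1"
  shows "((\<lambda>x. x - (1 - x^2) * artanh x) has_real_derivative (2 * x * artanh x)) (at x)"
proof -
  have "x^2 < 1" using assms by (simp add: abs_square_less_1)
  hence nz: "1 - x^2 \<noteq> 0" by simp
  have eq: "1 + x^2/(1-x^2) = 1/(1-x^2)"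
  proof -
    have "1/(1-x^2) = ((1-x^2) + x^2)/(1-x^2)" by simp
    also have "\<dots> = (1-x^2)/(1-x^2) + x^2/(1-x^2)" by (rule add_divide_distrib)
    also have "\<dots> = 1 + x^2/(1-x^2)" using nz by simp
    finally show ?thesis by simp
  qed
  show ?thesis using assms nz eq
    by (auto intro!: derivative_eq_intros simp: algebra_simps)
qed

lemma q_pos:
  fixes s :: real assumes "0 < s" "s < 1"
  shows "artanh s < s / (1 - s^2)"
proof -
  have "(\<lambda>x. x - (1 - x^2) * artanh x) 0 < (\<lambda>x. x - (1 - x^2) * artanh x) s"
  proof (rule DERIV_pos_imp_increasing_open[OF assms(1)])
    fix x :: real assume x: "0 < x" "x < s"
    have "2 * x * artanh x > 0" using artanh_pos[of x] x assms by simp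
    thus "\<exists>y. ((\<lambda>x. x - (1 - x^2) * artanh x) has_real_derivative y) (at x) \<and> 0 < y"
      using r_der[of x] x assms by auto
  next
    show "continuous_on {0..s} (\<lambda>x. x - (1 - x^2) * artanh x)"
    proof (intro continuous_at_imp_continuous_on ballI)
      fix x assume "x \<in> {0..s}"
      hence "\<bar>x\<bar> < 1" using assms by auto
      thus "isCont (\<lambda>x. x - (1 - x^2) * artanh x) x" by (rule DERIV_isCont[OF r_der])
    qed
  qed
  hence "(1 - s^2) * artanh s < s" by simp
  moreover have "s^2 < 1" using assms by (simp add: power_less_one_iff)
  ultimately show ?thesis by (simp add: field_simps)
qed

lemma h_der:
  fixes x :: real assumes "0 < x" "x < 1"
  shows "((\<lambda>x. artanh x / x) has_real_derivative ((1 / (1 - x^2) * x - artanh x * 1) / (x * x))) (at x)"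
proof (rule DERIV_divide[OF artanh_real_has_field_derivative DERIV_ident])
  show "\<bar>x\<bar> < 1" using assms by simp
  show "x \<noteq> 0" using assms by simp
qed

lemma h_mono:
  fixes a b :: real assumes "0 < a" "a < b" "b < 1"
  shows "artanh a / a < artanh b / b"
proof (rule DERIV_pos_imp_increasing_open[OF assms(2)])
  fix x :: real assume x: "a < x" "x < b"
  have "(1 / (1 - x^2) * x - artanh x * 1) / (x * x) > 0" using q_pos[of x] x assms by simp
  thus "\<exists>y. ((\<lambda>x. artanh x / x) has_real_derivative y) (at x) \<and> 0 < y"
    using h_der[of x] x assms by auto
next
  show "continuous_on {a..b} (\<lambda>x. artanh x / x)"
  proof (intro continuous_at_imp_continuous_on ballI)
    fix x assume "x \<in> {a..b}"
    hence "0 < x" "x < 1" using assms by auto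
    thus "isCont (\<lambda>x. artanh x / x) x" by (rule DERIV_isCont[OF h_der])
  qed
qed

lemma h_inj:
  fixes a b :: real assumes "0 < a" "a < 1" "0 < b" "b < 1" "artanh a / a = artanh b / b"
  shows "a = b"
  using h_mono[of a b] h_mono[of b a] assms by (cases a b rule: linorder_cases) auto

lemma lam_gg:
  fixes s :: real assumes s: "0 < s" "s < 1" and nz: "gg s \<noteq> 0"
  shows "lam (gg s) = (1 - s^2) / 4"
proof -
  have "(THE l. 0 < l \<and> l < 1/4 \<and> -1 + artanh (sqrt (1 - 4*l)) / sqrt (1 - 4*l) = gg s)
        = (1 - s^2) / 4"
  proof (rule the_equality)
    have "s^2 < 1" using s by (simp add: power_less_one_iff)
    moreover have "sqrt (1 - 4 * ((1 - s^2) / 4)) = s"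
    proof -
      have "1 - 4 * ((1 - s^2) / 4) = s^2" by (simp add: field_simps)
      thus ?thesis using s by simp
    qed
    ultimately show "0 < (1 - s^2) / 4 \<and> (1 - s^2) / 4 < 1/4 \<and>
        -1 + artanh (sqrt (1 - 4*((1 - s^2) / 4))) / sqrt (1 - 4*((1 - s^2) / 4)) = gg s"
      using s by (simp add: gg_artanh)
  next
    fix l assume l: "0 < l \<and> l < 1/4 \<and> -1 + artanh (sqrt (1 - 4*l)) / sqrt (1 - 4*l) = gg s"
    define t where "t = sqrt (1 - 4*l)"
    have t: "0 < t" "t < 1" using l unfolding t_def by (auto simp: real_sqrt_less_iff)
    have "artanh t / t = artanh s / s" using l unfolding t_def gg_artanh by simp
    hence "t = s" using h_inj t s by blast
    moreover have "t^2 = 1 - 4*l" unfolding t_def using l by simp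
    ultimately have "1 - 4*l = s^2" by simp
    thus "l = (1 - s^2) / 4" by simp
  qed
  thus ?thesis using nz unfolding lam_def by simp
qed

lemma ev_gg: "eventually (\<lambda>s. 0 < s \<and> s < 1 \<and> gg s > 0) (at_right (0::real))"
proof -
  have "eventually (\<lambda>s::real. 0 < s) (at_right 0)" by real_asymp
  moreover have "eventually (\<lambda>s::real. s < 1) (at_right 0)" by real_asymp
  moreover have "eventually (\<lambda>s::real. ln ((1 + s) / (1 - s)) / (2 * s) - 1 > 0) (at_right 0)"
    by real_asymp
  ultimately show ?thesis unfolding gg_def by eventually_elim auto
qed

lemma gg_lim: "(gg \<longlongrightarrow> 0) (at_right 0)"
  unfolding gg_def by real_asymp

lemma gg_sq: "((\<lambda>s. gg s / s^2) \<longlongrightarrow> 1/3) (at_right 0)"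
  unfolding gg_def by real_asymp

lemma gg_ln: "((\<lambda>s. ln (1 - s^2) / gg s) \<longlongrightarrow> -3) (at_right 0)"
  unfolding gg_def by real_asymp

lemma f0_lim: "((\<lambda>s. - ln ((1 - s^2) / 4) - 2 * gg s - gg s * ln (s^2) + gg s * ln (gg s))
   \<longlongrightarrow> - ln (1/4)) (at_right 0)"
  unfolding gg_def by real_asymp

lemma j0_lim: "((\<lambda>s. - (1/2) * ln (1 - 4 * (gg s + 1) * ((1 - s^2) / 4)) + (1/2) * ln 2 + (1/2) * ln (gg s))
   \<longlongrightarrow> ln 2 / 2 - ln (2 / 3) / 2 + ln (1 / 3) / 2) (at_right 0)"
  unfolding gg_def by real_asymp

lemma f0_gg:
  fixes s :: real assumes "0 < s" "s < 1" "gg s > 0"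
  shows "f0 (gg s) = - ln ((1 - s^2) / 4) - 2 * gg s - gg s * ln (s^2) + gg s * ln (gg s)"
proof -
  have l: "lam (gg s) = (1 - s^2) / 4" using lam_gg[of s] assms by simp
  have e: "1 - 4 * ((1 - s^2) / 4) = s^2" by (simp add: field_simps)
  show ?thesis unfolding f0_def f_def l e by simp
qed

lemma j0_gg:
  fixes s :: real assumes "0 < s" "s < 1" "gg s > 0"
  shows "j0 (gg s) = - (1/2) * ln (1 - 4 * (gg s + 1) * ((1 - s^2) / 4)) + (1/2) * ln 2 + (1/2) * ln (gg s)"
proof -
  have l: "lam (gg s) = (1 - s^2) / 4" using lam_gg[of s] assms by simp
  show ?thesis unfolding j0_def j_def l by simp
qed

theorem lemma1:
  fixes F J :: "real \<Rightarrow> real" and U V :: "real set"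
  assumes "0 \<in> U" "{0<..} \<subseteq> U" "real_analytic_on F U" "\<forall>\<theta>>0. F \<theta> = f0 \<theta>"
      and "0 \<in> V" "{0<..} \<subseteq> V" "real_analytic_on J V" "\<forall>\<theta>>0. J \<theta> = j0 \<theta>"
  shows "(\<forall>K>0. \<exists>\<epsilon>>0. \<exists>C>0. \<forall>\<theta>\<in>{0<..<\<epsilon>}. \<forall>\<delta>::real. \<bar>\<delta>\<bar> \<le> K * \<theta> \<longrightarrow>
            \<bar>F (\<theta> + \<delta>) - F \<theta> - deriv F 0 * \<delta>\<bar> \<le> C * \<theta> * \<bar>\<delta>\<bar> \<and>
            \<bar>J (\<theta> + \<delta>) - J \<theta>\<bar> \<le> C * \<bar>\<delta>\<bar>)
         \<and> F 0 = ln 4 \<and> exp (deriv F 0) = exp 1 / 3 \<and> J 0 = 0"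
proof -
  obtain \<rho>F MF F1 where \<rho>F: "\<rho>F > 0" "MF > 0"
    and dF: "\<And>x. \<bar>x\<bar> \<le> \<rho>F \<Longrightarrow> (F has_real_derivative F1 x) (at x)"
    and bF: "\<And>x. \<bar>x\<bar> \<le> \<rho>F \<Longrightarrow> \<bar>F1 x - F1 0\<bar> \<le> MF * \<bar>x\<bar>"
    using analytic_local[OF assms(3,1)] by blast
  obtain \<rho>J MJ J1 where \<rho>J: "\<rho>J > 0" "MJ > 0"
    and dJ: "\<And>x. \<bar>x\<bar> \<le> \<rho>J \<Longrightarrow> (J has_real_derivative J1 x) (at x)"
    and bJ: "\<And>x. \<bar>x\<bar> \<le> \<rho>J \<Longrightarrow> \<bar>J1 x\<bar> \<le> MJ"
    using analytic_local[OF assms(7,5)] by blast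
  have dF0: "(F has_real_derivative F1 0) (at 0)" using dF \<rho>F by simp
  have dJ0: "(J has_real_derivative J1 0) (at 0)" using dJ \<rho>J by simp
  have derF: "deriv F 0 = F1 0" using dF0 by (rule DERIV_imp_deriv)
  have part1: "\<forall>K>0. \<exists>\<epsilon>>0. \<exists>C>0. \<forall>\<theta>\<in>{0<..<\<epsilon>}. \<forall>\<delta>::real. \<bar>\<delta>\<bar> \<le> K * \<theta> \<longrightarrow>
            \<bar>F (\<theta> + \<delta>) - F \<theta> - deriv F 0 * \<delta>\<bar> \<le> C * \<theta> * \<bar>\<delta>\<bar> \<and>
            \<bar>J (\<theta> + \<delta>) - J \<theta>\<bar> \<le> C * \<bar>\<delta>\<bar>"
  proof (intro allI impI)
    fix K :: real assume K: "K > 0"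
    define \<epsilon> where "\<epsilon> = min \<rho>F \<rho>J / (1 + K)"
    define C where "C = MF * (1 + K) + MJ"
    have "\<epsilon> > 0" using \<rho>F \<rho>J K by (simp add: \<epsilon>_def)
    moreover have "C > 0" using \<rho>F \<rho>J K by (simp add: C_def add_pos_pos)
    moreover have "\<forall>\<theta>\<in>{0<..<\<epsilon>}. \<forall>\<delta>::real. \<bar>\<delta>\<bar> \<le> K * \<theta> \<longrightarrow>
            \<bar>F (\<theta> + \<delta>) - F \<theta> - deriv F 0 * \<delta>\<bar> \<le> C * \<theta> * \<bar>\<delta>\<bar> \<and>
            \<bar>J (\<theta> + \<delta>) - J \<theta>\<bar> \<le> C * \<bar>\<delta>\<bar>"
    proof (intro ballI allI impI)
      fix \<theta> \<delta> :: real assume th: "\<theta> \<in> {0<..<\<epsilon>}" and de: "\<bar>\<delta>\<bar> \<le> K * \<theta>"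
      define m where "m = (1 + K) * \<theta>"
      have m: "m < \<rho>F" "m < \<rho>J" using th K unfolding m_def \<epsilon>_def
        by (auto simp: field_simps)
      have th0: "\<theta> > 0" using th by simp
      have x1: "\<bar>\<theta>\<bar> \<le> m" and x2: "\<bar>\<theta> + \<delta>\<bar> \<le> m" using th0 de K unfolding m_def
        by (auto simp: algebra_simps)
      have "\<bar>(F (\<theta> + \<delta>) - F1 0 * (\<theta> + \<delta>)) - (F \<theta> - F1 0 * \<theta>)\<bar> \<le> (MF * m) * \<bar>(\<theta> + \<delta>) - \<theta>\<bar>"
      proof (rule lip_bound[where m = m and H' = "\<lambda>t. F1 t - F1 0"])
        show "((\<lambda>t. F t - F1 0 * t) has_real_derivative F1 t - F1 0) (at t)" if "\<bar>t\<bar> \<le> m" for t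
          using dF[of t] that m by (auto intro!: derivative_eq_intros)
        show "\<bar>F1 t - F1 0\<bar> \<le> MF * m" if "\<bar>t\<bar> \<le> m" for t
        proof -
          have "\<bar>t\<bar> \<le> \<rho>F" using that m by linarith
          hence "\<bar>F1 t - F1 0\<bar> \<le> MF * \<bar>t\<bar>" by (rule bF)
          also have "\<dots> \<le> MF * m" using that \<rho>F by (intro mult_left_mono) auto
          finally show ?thesis .
        qed
      qed (use x1 x2 in auto)
      hence A: "\<bar>F (\<theta> + \<delta>) - F \<theta> - deriv F 0 * \<delta>\<bar> \<le> MF * (1 + K) * \<theta> * \<bar>\<delta>\<bar>"
        unfolding derF m_def by (simp add: algebra_simps)
      have "MF * (1 + K) * \<theta> * \<bar>\<delta>\<bar> \<le> C * \<theta> * \<bar>\<delta>\<bar>"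
        unfolding C_def using \<rho>J th0 by (intro mult_right_mono) auto
      moreover have "\<bar>J (\<theta> + \<delta>) - J \<theta>\<bar> \<le> MJ * \<bar>(\<theta> + \<delta>) - \<theta>\<bar>"
      proof (rule lip_bound[where m = m and H' = J1])
        show "(J has_real_derivative J1 t) (at t)" if "\<bar>t\<bar> \<le> m" for t
          using dJ[of t] that m by auto
        show "\<bar>J1 t\<bar> \<le> MJ" if "\<bar>t\<bar> \<le> m" for t
          using bJ[of t] that m by auto
      qed (use x1 x2 in auto)
      moreover have "MJ * \<bar>\<delta>\<bar> \<le> C * \<bar>\<delta>\<bar>"
        unfolding C_def using \<rho>F K by (intro mult_right_mono) auto
      ultimately show "\<bar>F (\<theta> + \<delta>) - F \<theta> - deriv F 0 * \<delta>\<bar> \<le> C * \<theta> * \<bar>\<delta>\<bar> \<and>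
            \<bar>J (\<theta> + \<delta>) - J \<theta>\<bar> \<le> C * \<bar>\<delta>\<bar>" using A by auto
    qed
    ultimately show "\<exists>\<epsilon>>0. \<exists>C>0. \<forall>\<theta>\<in>{0<..<\<epsilon>}. \<forall>\<delta>::real. \<bar>\<delta>\<bar> \<le> K * \<theta> \<longrightarrow>
            \<bar>F (\<theta> + \<delta>) - F \<theta> - deriv F 0 * \<delta>\<bar> \<le> C * \<theta> * \<bar>\<delta>\<bar> \<and>
            \<bar>J (\<theta> + \<delta>) - J \<theta>\<bar> \<le> C * \<bar>\<delta>\<bar>" by blast
  qed
  have ev: "eventually (\<lambda>s. 0 < s \<and> s < 1 \<and> gg s > 0) (at_right (0::real))" by (rule ev_gg)
  have Fgg: "eventually (\<lambda>s. F (gg s) = - ln ((1 - s^2) / 4) - 2 * gg s - gg s * ln (s^2) + gg s * ln (gg s)) (at_right 0)"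
    using ev by eventually_elim (use f0_gg assms(4) in auto)
  have Jgg: "eventually (\<lambda>s. J (gg s) = - (1/2) * ln (1 - 4 * (gg s + 1) * ((1 - s^2) / 4)) + (1/2) * ln 2 + (1/2) * ln (gg s)) (at_right 0)"
    using ev by eventually_elim (use j0_gg assms(8) in auto)
  have FL: "((\<lambda>s. F (gg s)) \<longlongrightarrow> F 0) (at_right 0)"
    by (rule isCont_tendsto_compose[OF DERIV_isCont[OF dF0] gg_lim])
  have JL: "((\<lambda>s. J (gg s)) \<longlongrightarrow> J 0) (at_right 0)"
    by (rule isCont_tendsto_compose[OF DERIV_isCont[OF dJ0] gg_lim])
  have FL2: "((\<lambda>s. F (gg s)) \<longlongrightarrow> - ln (1/4)) (at_right 0)"
    using f0_lim Fgg by (simp add: tendsto_cong)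
  have F0: "F 0 = ln 4"
    using tendsto_unique[OF trivial_limit_at_right_real FL FL2] by (simp add: ln_div)
  have JL2: "((\<lambda>s. J (gg s)) \<longlongrightarrow> ln 2 / 2 - ln (2 / 3) / 2 + ln (1 / 3) / 2) (at_right 0)"
    using j0_lim Jgg by (simp add: tendsto_cong)
  have z: "ln 2 / 2 - ln (2 / 3) / 2 + ln (1 / 3) / 2 = (0::real)"
    by (simp add: ln_div field_simps)
  have J0: "J 0 = 0"
    using tendsto_unique[OF trivial_limit_at_right_real JL JL2] z by simp
  have gfl: "filterlim gg (at 0) (at_right 0)"
    by (rule filterlim_atI[OF gg_lim]) (use ev in \<open>eventually_elim, auto\<close>)
  have "((\<lambda>h. (F (0 + h) - F 0) / h) \<longlongrightarrow> F1 0) (at 0)"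
    using dF0 by (simp add: DERIV_def)
  hence DL: "((\<lambda>s. (F (gg s) - F 0) / gg s) \<longlongrightarrow> F1 0) (at_right 0)"
    using filterlim_compose[OF _ gfl] by force
  have eq2: "eventually (\<lambda>s. (F (gg s) - F 0) / gg s = - (ln (1 - s^2) / gg s) - 2 + ln (gg s / s^2)) (at_right 0)"
    using ev Fgg
  proof eventually_elim
    case (elim s)
    hence s: "0 < s" "s < 1" "gg s > 0" by auto
    have "1 - s^2 > 0" using s by (simp add: power_less_one_iff)
    hence L1: "ln ((1 - s^2) / 4) = ln (1 - s^2) - ln 4" by (simp add: ln_div)
    have "ln (gg s / s^2) = ln (gg s) - ln (s^2)" using s by (simp add: ln_div)
    hence L2: "gg s * ln (gg s / s^2) = gg s * ln (gg s) - gg s * ln (s^2)"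
      by (simp add: right_diff_distrib)
    have Fg: "F (gg s) = - ln ((1 - s^2) / 4) - 2 * gg s - gg s * ln (s^2) + gg s * ln (gg s)"
      using elim by simp
    have A: "F (gg s) - F 0 = - ln (1 - s^2) - 2 * gg s + gg s * ln (gg s / s^2)"
      using Fg L1 L2 F0 by linarith
    show ?case unfolding A using s by (simp add: field_simps)
  qed
  have "((\<lambda>s. - (ln (1 - s^2) / gg s) - 2 + ln (gg s / s^2)) \<longlongrightarrow> - (-3) - 2 + ln (1/3)) (at_right 0)"
    by (intro tendsto_intros gg_ln gg_sq) auto
  hence DL2: "((\<lambda>s. (F (gg s) - F 0) / gg s) \<longlongrightarrow> 1 - ln 3) (at_right 0)"
    using eq2 by (simp add: tendsto_cong ln_div)
  have "F1 0 = 1 - ln 3"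
    using tendsto_unique[OF trivial_limit_at_right_real DL DL2] .
  hence "exp (deriv F 0) = exp 1 / 3" unfolding derF by (simp add: exp_diff)
  with part1 F0 J0 show ?thesis by blast
qed

end
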